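(* Let $N,n,m,p$ be positive integers, $B\in\mathbb{R}^{n\times p}$, $C\in\mathbb{R}^{m\times n}$, $H\in\mathbb{R}^{n\times m}$, $W=[w_{ij}]\in\mathbb{R}^{N\times N}$ with $w_{ii}=0$ for all $i$, $\Delta=\mathrm{diag}(\delta_1,\dots,\delta_N)$ with $\delta_i\in\{0,1\}$, and $h>0$. Put $\Phi_s=e^hI_{Nn}+(e^h-1)W\otimes HC$ and $\Psi_s=(e^h-1)(\Delta\otimes B)$. If the continuous-time system $\dot X(t)=(I_{Nn}+W\otimes HC)X(t)+(\Delta\otimes B)U(t)$ is controllable, then the discrete-time system $X(k+1)=\Phi_sX(k)+\Psi_sU(k)$ is controllable.
   Context: This is the networked system with self-loop node dynamics $A=I_n$ and its sampled-data version with sampling period $h$. The continuous-time system is controllable in the usual sense (equivalently $\mathrm{rank}[sI-\Phi,\ \Delta\otimes B]=Nn$ for all $s\in\mathbb{C}$, $\Phi=I_{Nn}+W\otimes HC$). The discrete-time system is called controllable if every initial state can be steered to the origin in finitely many steps. $\otimes$ is the Kronecker product. *)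

theory Defs
  imports "HOL-Analysis.Analysis" "Jordan_Normal_Form.Matrix"
begin

definition kron :: "real mat \<Rightarrow> real mat \<Rightarrow> real mat" where
  "kron A B = mat (dim_row A * dim_row B) (dim_col A * dim_col B)
     (\<lambda>(i,j). A $$ (i div dim_row B, j div dim_col B) * B $$ (i mod dim_row B, j mod dim_col B))"

definition ct_controllable :: "real mat \<Rightarrow> real mat \<Rightarrow> bool" where
  "ct_controllable A B \<longleftrightarrow>
     (\<forall>x0 x1. dim_vec x0 = dim_row A \<and> dim_vec x1 = dim_row A \<longrightarrow>
        (\<exists>T>0. \<exists>u x.
           (\<forall>t\<in>{0..T}. dim_vec (u t) = dim_col B \<and> dim_vec (x t) = dim_row A) \<and>
           (\<forall>j<dim_col B. continuous_on {0..T} (\<lambda>t. u t $ j)) \<and>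
           x 0 = x0 \<and> x T = x1 \<and>
           (\<forall>t\<in>{0..T}. \<forall>i<dim_row A.
              ((\<lambda>s. x s $ i) has_real_derivative ((A *\<^sub>v x t + B *\<^sub>v u t) $ i)) (at t within {0..T}))))"

fun dt_traj :: "real mat \<Rightarrow> real mat \<Rightarrow> real vec \<Rightarrow> (nat \<Rightarrow> real vec) \<Rightarrow> nat \<Rightarrow> real vec" where
  "dt_traj Phi Psi x0 u 0 = x0"
| "dt_traj Phi Psi x0 u (Suc k) = Phi *\<^sub>v dt_traj Phi Psi x0 u k + Psi *\<^sub>v u k"

definition dt_controllable :: "real mat \<Rightarrow> real mat \<Rightarrow> bool" where
  "dt_controllable Phi Psi \<longleftrightarrow>
     (\<forall>x0. dim_vec x0 = dim_row Phi \<longrightarrow>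
        (\<exists>k u. (\<forall>j<k. dim_vec (u j) = dim_col Psi) \<and>
               dt_traj Phi Psi x0 u k = 0\<^sub>v (dim_row Phi)))"

end

theory Submission imports Defs "Jordan_Normal_Form.Determinant" begin

lemma sp_self_nonneg: "(v::real vec) \<bullet> v \<ge> 0"
  unfolding scalar_prod_def by (auto intro: sum_nonneg)

lemma sp_self_0: assumes "(v::real vec) \<in> carrier_vec n" "scalar_prod v v = 0" shows "v = 0\<^sub>v n"
proof -
  have "\<forall>i\<in>{0..<dim_vec v}. v $ i * v $ i = 0"
    using assms(2) unfolding scalar_prod_def
    by (subst sum_nonneg_eq_0_iff[symmetric]) auto
  then show ?thesis using assms(1) by (intro eq_vecI) auto
qed

definition itv :: "real mat \<Rightarrow> nat \<Rightarrow> real vec \<Rightarrow> real vec" where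
  "itv M k = ((\<lambda>v. M *\<^sub>v v) ^^ k)"

lemma itv_0[simp]: "itv M 0 v = v" by (simp add: itv_def)
lemma itv_Suc: "itv M (Suc k) v = M *\<^sub>v itv M k v" by (simp add: itv_def)
lemma itv_Suc2: "itv M (Suc k) v = itv M k (M *\<^sub>v v)" by (simp add: itv_def funpow_Suc_right del: funpow.simps)
lemma itv_carrier[simp]: "M \<in> carrier_mat d d \<Longrightarrow> v \<in> carrier_vec d \<Longrightarrow> itv M k v \<in> carrier_vec d"
  by (induct k) (auto simp: itv_Suc)

fun gram :: "real mat \<Rightarrow> real mat \<Rightarrow> nat \<Rightarrow> real mat" where
  "gram Phi Psi 0 = 0\<^sub>m (dim_row Phi) (dim_row Phi)"
| "gram Phi Psi (Suc k) = Phi * gram Phi Psi k * transpose_mat Phi + Psi * transpose_mat Psi"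

lemma gram_carrier[simp]: "Phi \<in> carrier_mat d d \<Longrightarrow> Psi \<in> carrier_mat d q \<Longrightarrow> gram Phi Psi k \<in> carrier_mat d d"
  by (induct k) auto

definition inp :: "real mat \<Rightarrow> real mat \<Rightarrow> nat \<Rightarrow> real vec \<Rightarrow> nat \<Rightarrow> real vec" where
  "inp Phi Psi k z j = transpose_mat Psi *\<^sub>v itv (transpose_mat Phi) (k - 1 - j) z"

lemma traj_cong: "(\<forall>j<k. u j = u' j) \<Longrightarrow> dt_traj Phi Psi x0 u k = dt_traj Phi Psi x0 u' k"
  by (induct k) auto

lemma traj_formula:
  assumes Phi: "Phi \<in> carrier_mat d d" and Psi: "Psi \<in> carrier_mat d q"
    and x0: "x0 \<in> carrier_vec d"
  shows "z \<in> carrier_vec d \<Longrightarrow> dt_traj Phi Psi x0 (inp Phi Psi k z) k = itv Phi k x0 + gram Phi Psi k *\<^sub>v z"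
proof (induct k arbitrary: z)
  case 0
  then show ?case using Phi x0 by auto
next
  case (Suc k)
  let ?z = "transpose_mat Phi *\<^sub>v z"
  have z': "?z \<in> carrier_vec d" using Phi Suc.prems by auto
  have "dt_traj Phi Psi x0 (inp Phi Psi (Suc k) z) k = dt_traj Phi Psi x0 (inp Phi Psi k ?z) k"
  proof (rule traj_cong, intro allI impI)
    fix j assume "j < k"
    then have "Suc k - 1 - j = Suc (k - 1 - j)" by auto
    then show "inp Phi Psi (Suc k) z j = inp Phi Psi k ?z j"
      unfolding inp_def by (simp add: itv_Suc2)
  qed
  also have "\<dots> = itv Phi k x0 + gram Phi Psi k *\<^sub>v ?z" using Suc z' by auto
  finally have IH: "dt_traj Phi Psi x0 (inp Phi Psi (Suc k) z) k = itv Phi k x0 + gram Phi Psi k *\<^sub>v ?z" .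
  have G: "gram Phi Psi k \<in> carrier_mat d d" using Phi Psi by auto
  have 1: "Phi *\<^sub>v (itv Phi k x0 + gram Phi Psi k *\<^sub>v ?z) = itv Phi (Suc k) x0 + (Phi * gram Phi Psi k * transpose_mat Phi) *\<^sub>v z"
  proof -
    have "(Phi * gram Phi Psi k * transpose_mat Phi) *\<^sub>v z = Phi *\<^sub>v (gram Phi Psi k *\<^sub>v ?z)"
      using Phi G Suc.prems by (simp add: assoc_mult_mat_vec[of _ d d _ d])
    then show ?thesis
    using Phi G x0 Suc.prems z'
    by (simp add: itv_Suc mult_add_distrib_mat_vec)
  qed
  have 2: "Psi *\<^sub>v inp Phi Psi (Suc k) z k = (Psi * transpose_mat Psi) *\<^sub>v z"
    unfolding inp_def using Psi Suc.prems by (simp add: assoc_mult_mat_vec)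
  have 3: "(Phi * gram Phi Psi k * transpose_mat Phi + Psi * transpose_mat Psi) *\<^sub>v z =
     (Phi * gram Phi Psi k * transpose_mat Phi) *\<^sub>v z + (Psi * transpose_mat Psi) *\<^sub>v z"
    by (rule add_mult_distrib_mat_vec[of _ d d]) (use Phi Psi G Suc.prems in auto)
  have c1: "itv Phi (Suc k) x0 \<in> carrier_vec d" using Phi x0 by simp
  have c2: "(Phi * gram Phi Psi k * transpose_mat Phi) *\<^sub>v z \<in> carrier_vec d" by (rule carrier_vecI) (use Phi in simp)
  have c3: "(Psi * transpose_mat Psi) *\<^sub>v z \<in> carrier_vec d" by (rule carrier_vecI) (use Psi in simp)
  have "dt_traj Phi Psi x0 (inp Phi Psi (Suc k) z) (Suc k) =
     Phi *\<^sub>v dt_traj Phi Psi x0 (inp Phi Psi (Suc k) z) k + Psi *\<^sub>v inp Phi Psi (Suc k) z k" by simp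
  also have "\<dots> = itv Phi (Suc k) x0 + (Phi * gram Phi Psi k * transpose_mat Phi) *\<^sub>v z + (Psi * transpose_mat Psi) *\<^sub>v z"
    unfolding IH 1 2 ..
  also have "\<dots> = itv Phi (Suc k) x0 + gram Phi Psi (Suc k) *\<^sub>v z"
    unfolding gram.simps 3 using c1 c2 c3 by (rule assoc_add_vec)
  finally show ?case .
qed

lemma gram_psd:
  assumes Phi: "Phi \<in> carrier_mat d d" and Psi: "Psi \<in> carrier_mat d q"
  shows "w \<in> carrier_vec d \<Longrightarrow> 0 \<le> scalar_prod w (gram Phi Psi k *\<^sub>v w) \<and>
    (scalar_prod w (gram Phi Psi k *\<^sub>v w) = 0 \<longrightarrow> (\<forall>j<k. transpose_mat Psi *\<^sub>v itv (transpose_mat Phi) j w = 0\<^sub>v q))"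
proof (induct k arbitrary: w)
  case 0
  have "0\<^sub>m d d *\<^sub>v w = 0\<^sub>v d" using 0 by (intro eq_vecI) auto
  then show ?case using Phi 0 by simp
next
  case (Suc k)
  let ?w = "transpose_mat Phi *\<^sub>v w"
  let ?G = "gram Phi Psi k"
  have w': "?w \<in> carrier_vec d" using Phi Suc.prems by auto
  have G: "?G \<in> carrier_mat d d" using Phi Psi by auto
  have e1: "(Phi * ?G * transpose_mat Phi) *\<^sub>v w = Phi *\<^sub>v (?G *\<^sub>v ?w)"
    using Phi G Suc.prems by (simp add: assoc_mult_mat_vec[of _ d d _ d])
  have e2: "(Psi * transpose_mat Psi) *\<^sub>v w = Psi *\<^sub>v (transpose_mat Psi *\<^sub>v w)"
    using Psi Suc.prems by (simp add: assoc_mult_mat_vec)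
  have "gram Phi Psi (Suc k) *\<^sub>v w = Phi *\<^sub>v (?G *\<^sub>v ?w) + Psi *\<^sub>v (transpose_mat Psi *\<^sub>v w)"
  proof -
    have c1: "Phi * ?G * transpose_mat Phi \<in> carrier_mat d d"
      by (rule mult_carrier_mat[of _ d d]) (use Phi G in simp_all)
    have c2: "Psi * transpose_mat Psi \<in> carrier_mat d d"
      by (rule mult_carrier_mat[of _ d q]) (use Psi in simp_all)
    show ?thesis
      unfolding gram.simps e1[symmetric] e2[symmetric]
      by (rule add_mult_distrib_mat_vec[OF c1 c2 Suc.prems])
  qed
  then have "scalar_prod w (gram Phi Psi (Suc k) *\<^sub>v w) =
      scalar_prod w (Phi *\<^sub>v (?G *\<^sub>v ?w) + Psi *\<^sub>v (transpose_mat Psi *\<^sub>v w))" by (simp only:)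
  also have "\<dots> = scalar_prod w (Phi *\<^sub>v (?G *\<^sub>v ?w)) + scalar_prod w (Psi *\<^sub>v (transpose_mat Psi *\<^sub>v w))"
    by (rule scalar_prod_add_distrib[of w d]) (use Phi Psi G Suc.prems in \<open>auto intro!: carrier_vecI\<close>)
  also have "\<dots> = scalar_prod ?w (?G *\<^sub>v ?w) + scalar_prod (transpose_mat Psi *\<^sub>v w) (transpose_mat Psi *\<^sub>v w)"
    using transpose_vec_mult_scalar[OF Phi, of "?G *\<^sub>v ?w" w] transpose_vec_mult_scalar[OF Psi, of "transpose_mat Psi *\<^sub>v w" w]
      Phi Psi G Suc.prems by simp
  finally have eq: "scalar_prod w (gram Phi Psi (Suc k) *\<^sub>v w) =
     scalar_prod ?w (?G *\<^sub>v ?w) + scalar_prod (transpose_mat Psi *\<^sub>v w) (transpose_mat Psi *\<^sub>v w)" .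
  have IH: "0 \<le> scalar_prod ?w (?G *\<^sub>v ?w) \<and>
    (scalar_prod ?w (?G *\<^sub>v ?w) = 0 \<longrightarrow> (\<forall>j<k. transpose_mat Psi *\<^sub>v itv (transpose_mat Phi) j ?w = 0\<^sub>v q))"
    using Suc.hyps w' by blast
  have nn: "0 \<le> scalar_prod (transpose_mat Psi *\<^sub>v w) (transpose_mat Psi *\<^sub>v w)" by (rule sp_self_nonneg)
  show ?case
  proof (intro conjI impI allI)
    show "0 \<le> scalar_prod w (gram Phi Psi (Suc k) *\<^sub>v w)" using eq IH nn by simp
  next
    fix j assume z: "scalar_prod w (gram Phi Psi (Suc k) *\<^sub>v w) = 0" and j: "j < Suc k"
    have z1: "scalar_prod ?w (?G *\<^sub>v ?w) = 0" and z2: "scalar_prod (transpose_mat Psi *\<^sub>v w) (transpose_mat Psi *\<^sub>v w) = 0"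
      using eq IH nn z by linarith+
    show "transpose_mat Psi *\<^sub>v itv (transpose_mat Phi) j w = 0\<^sub>v q"
    proof (cases j)
      case 0
      then show ?thesis using sp_self_0[OF _ z2, of q] Psi Suc.prems by simp
    next
      case (Suc i)
      then show ?thesis using IH z1 j by (simp add: itv_Suc2)
    qed
  qed
qed

lemma dt_ctrl:
  assumes Phi: "Phi \<in> carrier_mat d d" and Psi: "Psi \<in> carrier_mat d q"
    and hyp: "\<And>w. w \<in> carrier_vec d \<Longrightarrow> (\<forall>j<Suc d. transpose_mat Psi *\<^sub>v itv (transpose_mat Phi) j w = 0\<^sub>v q) \<Longrightarrow> w = 0\<^sub>v d"
  shows "dt_controllable Phi Psi"
proof -
  let ?G = "gram Phi Psi (Suc d)"
  have G: "?G \<in> carrier_mat d d" using Phi Psi by (rule gram_carrier)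
  have "Determinant.det ?G \<noteq> 0"
  proof
    assume "Determinant.det ?G = 0"
    then obtain v where v: "v \<in> carrier_vec d" "v \<noteq> 0\<^sub>v d" "?G *\<^sub>v v = 0\<^sub>v d"
      using det_0_iff_vec_prod_zero[OF G] by auto
    have "scalar_prod v (?G *\<^sub>v v) = 0" using v by simp
    then have "\<forall>j<Suc d. transpose_mat Psi *\<^sub>v itv (transpose_mat Phi) j v = 0\<^sub>v q"
      using gram_psd[OF Phi Psi v(1)] by blast
    then show False using hyp v by blast
  qed
  then have "?G \<in> Units (ring_mat TYPE(real) d ())" by (rule det_non_zero_imp_unit[OF G])
  then have "\<exists>Bi \<in> carrier_mat d d. Bi * ?G = 1\<^sub>m d \<and> ?G * Bi = 1\<^sub>m d"
    unfolding Units_def ring_mat_def by simp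
  then obtain Bi where Bi: "Bi \<in> carrier_mat d d" "?G * Bi = 1\<^sub>m d" by blast
  show ?thesis unfolding dt_controllable_def
  proof (intro allI impI)
    fix x0 :: "real vec" assume "dim_vec x0 = dim_row Phi"
    then have x0: "x0 \<in> carrier_vec d" by (intro carrier_vecI) (use Phi in simp)
    let ?y = "- itv Phi (Suc d) x0"
    have y: "?y \<in> carrier_vec d" using x0 Phi by simp
    let ?z = "Bi *\<^sub>v ?y"
    have z: "?z \<in> carrier_vec d" using Bi y by simp
    have "?G *\<^sub>v ?z = ?y" using Bi G y by (simp add: assoc_mult_mat_vec[symmetric, of _ d d _ d])
    then have "dt_traj Phi Psi x0 (inp Phi Psi (Suc d) ?z) (Suc d) = 0\<^sub>v d"
      using traj_formula[OF Phi Psi x0 z, of "Suc d"] x0 Phi by simp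
    moreover have "\<forall>j<Suc d. dim_vec (inp Phi Psi (Suc d) ?z j) = dim_col Psi"
      unfolding inp_def by simp
    moreover have "dim_row Phi = d" using Phi by simp
    ultimately show "\<exists>k u. (\<forall>j<k. dim_vec (u j) = dim_col Psi) \<and> dt_traj Phi Psi x0 u k = 0\<^sub>v (dim_row Phi)"
      by metis
  qed
qed



lemma gronwall0:
  fixes g g' :: "real \<Rightarrow> real"
  assumes T: "0 \<le> T"
    and d: "\<And>t. t \<in> {0..T} \<Longrightarrow> (g has_real_derivative g' t) (at t within {0..T})"
    and b: "\<And>t. t \<in> {0..T} \<Longrightarrow> g' t \<le> L * g t"
    and nn: "\<And>t. t \<in> {0..T} \<Longrightarrow> 0 \<le> g t"
    and g0: "g 0 = 0"
    and t: "t \<in> {0..T}"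
  shows "g t = 0"
proof -
  define h where "h s = exp (- L * s) * g s" for s
  have dh: "(h has_real_derivative exp (- L * s) * (g' s - L * g s)) (at s within {0..T})"
    if "s \<in> {0..T}" for s
  proof -
    have "((\<lambda>s. exp (- L * s)) has_real_derivative exp (- L * s) * (- L)) (at s within {0..T})"
      by (auto intro!: derivative_eq_intros)
    from DERIV_mult[OF this d[OF that]] show ?thesis
      unfolding h_def by (simp add: algebra_simps)
  qed
  have cont: "continuous_on {0..T} h" by (rule DERIV_continuous_on[OF dh])
  have "h t \<le> h 0"
  proof (rule DERIV_nonpos_imp_decreasing_open[of 0 t h])
    show "0 \<le> t" using t by auto
    show "continuous_on {0..t} h" using cont t by (auto intro: continuous_on_subset)
    fix s assume s: "0 < s" "s < t"
    then have "s \<in> {0..T}" "s < T" using t by auto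
    then have "(h has_real_derivative exp (- L * s) * (g' s - L * g s)) (at s)"
      using dh[of s] s at_within_Icc_at[of 0 s T] by auto
    moreover have "exp (- L * s) * (g' s - L * g s) \<le> 0"
      using b[OF \<open>s \<in> {0..T}\<close>] by (simp add: mult_nonneg_nonpos)
    ultimately show "\<exists>y. (h has_real_derivative y) (at s) \<and> y \<le> 0" by blast
  qed
  then have "exp (- L * t) * g t \<le> 0" using g0 unfolding h_def by simp
  then have "g t \<le> 0" by (simp add: mult_le_0_iff)
  then show ?thesis using nn[OF t] by auto
qed


lemma ct_part:
  fixes A D Phi :: "real mat" and c :: real and w :: "real vec"
  assumes A: "A \<in> carrier_mat d d" and D: "D \<in> carrier_mat d q" and Phi: "Phi \<in> carrier_mat d d"
    and c: "c > 0"
    and PhiA: "\<And>x. x \<in> carrier_vec d \<Longrightarrow> Phi *\<^sub>v x = x + c \<cdot>\<^sub>v (A *\<^sub>v x)"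
    and ct: "ct_controllable A D"
    and w: "w \<in> carrier_vec d"
    and orth: "\<forall>j<Suc d. transpose_mat D *\<^sub>v itv (transpose_mat Phi) j w = 0\<^sub>v q"
  shows "w = 0\<^sub>v d"
proof -
  define a where "a k = itv (transpose_mat Phi) k w" for k
  have a_car: "a k \<in> carrier_vec d" for k unfolding a_def using Phi w by simp
  have dA: "dim_row A = d" "dim_col D = q" using A D by auto
  have "\<exists>T>0. \<exists>u x.
           (\<forall>t\<in>{0..T}. dim_vec (u t) = q \<and> dim_vec (x t) = d) \<and>
           (\<forall>j<q. continuous_on {0..T} (\<lambda>t. u t $ j)) \<and>
           x 0 = 0\<^sub>v d \<and> x T = w \<and>
           (\<forall>t\<in>{0..T}. \<forall>i<d.
              ((\<lambda>s. x s $ i) has_real_derivative ((A *\<^sub>v x t + D *\<^sub>v u t) $ i)) (at t within {0..T}))"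
    using ct[unfolded ct_controllable_def dA, rule_format, of "0\<^sub>v d" w] w by simp
  then obtain T u x where T: "T > 0"
    and ux': "\<forall>t\<in>{0..T}. dim_vec (u t) = q \<and> dim_vec (x t) = d"
    and x0: "x 0 = 0\<^sub>v d" and xT: "x T = w"
    and der': "\<forall>t\<in>{0..T}. \<forall>i<d.
              ((\<lambda>s. x s $ i) has_real_derivative ((A *\<^sub>v x t + D *\<^sub>v u t) $ i)) (at t within {0..T})"
    by (elim exE conjE) (rule that; assumption)
  have ux: "dim_vec (u t) = q \<and> dim_vec (x t) = d" if "t \<in> {0..T}" for t using ux' that by blast
  have der: "((\<lambda>s. x s $ i) has_real_derivative ((A *\<^sub>v x t + D *\<^sub>v u t) $ i)) (at t within {0..T})"
    if "t \<in> {0..T}" "i < d" for t i using der' that by blast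
  have xc: "x t \<in> carrier_vec d" if "t \<in> {0..T}" for t by (intro carrier_vecI) (use ux[OF that] in blast)
  have uc: "u t \<in> carrier_vec q" if "t \<in> {0..T}" for t by (intro carrier_vecI) (use ux[OF that] in blast)
  define y where "y k t = (\<Sum>i\<in>{0..<d}. a k $ i * x t $ i)" for k t
  have y_sp: "y k t = scalar_prod (a k) v" if "v = x t" "t \<in> {0..T}" for k t v
    unfolding y_def scalar_prod_def using ux[OF that(2)] that(1) by simp
  have key: "scalar_prod (a k) (A *\<^sub>v v) = (scalar_prod (a (Suc k)) v - scalar_prod (a k) v) / c"
    if v: "v \<in> carrier_vec d" for k v
  proof -
    have Av: "A *\<^sub>v v \<in> carrier_vec d" using A v by simp
    have "scalar_prod (a (Suc k)) v = scalar_prod (a k) (Phi *\<^sub>v v)"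
      unfolding a_def itv_Suc using transpose_vec_mult_scalar[OF Phi v] a_car[of k] unfolding a_def by simp
    also have "\<dots> = scalar_prod (a k) (v + c \<cdot>\<^sub>v (A *\<^sub>v v))" using PhiA[OF v] by simp
    also have "\<dots> = scalar_prod (a k) v + c * scalar_prod (a k) (A *\<^sub>v v)"
      using scalar_prod_add_distrib[of "a k" d v "c \<cdot>\<^sub>v (A *\<^sub>v v)"] a_car[of k] v Av by simp
    finally show ?thesis using c by (simp add: field_simps)
  qed
  have orth2: "scalar_prod (a k) (D *\<^sub>v v) = 0" if "k \<le> d" "v \<in> carrier_vec q" for k v
  proof -
    have "scalar_prod (a k) (D *\<^sub>v v) = scalar_prod (transpose_mat D *\<^sub>v a k) v"
      using transpose_vec_mult_scalar[OF D that(2) a_car[of k]] by simp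
    also have "transpose_mat D *\<^sub>v a k = 0\<^sub>v q" using orth that(1) unfolding a_def by auto
    finally show ?thesis using that(2) by simp
  qed
  have dy: "(y k has_real_derivative (y (Suc k) t - y k t) / c) (at t within {0..T})"
    if k: "k \<le> d" and t: "t \<in> {0..T}" for k t
  proof -
    have "(y k has_real_derivative (\<Sum>i\<in>{0..<d}. a k $ i * (A *\<^sub>v x t + D *\<^sub>v u t) $ i)) (at t within {0..T})"
      unfolding y_def[abs_def]
      by (intro DERIV_sum DERIV_cmult der[OF t]) auto
    moreover have "(\<Sum>i\<in>{0..<d}. a k $ i * (A *\<^sub>v x t + D *\<^sub>v u t) $ i) = scalar_prod (a k) (A *\<^sub>v x t + D *\<^sub>v u t)"
    proof -
      have dim: "dim_vec (A *\<^sub>v x t + D *\<^sub>v u t) = d" using D by simp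
      show ?thesis unfolding scalar_prod_def by (simp only: dim)
    qed
    moreover have "scalar_prod (a k) (A *\<^sub>v x t + D *\<^sub>v u t) = scalar_prod (a k) (A *\<^sub>v x t) + scalar_prod (a k) (D *\<^sub>v u t)"
      by (rule scalar_prod_add_distrib[of _ d]) (use a_car A D xc[OF t] uc[OF t] in auto)
    moreover have "scalar_prod (a k) (A *\<^sub>v x t) = (y (Suc k) t - y k t) / c"
      using key[OF xc[OF t], of k] y_sp[OF refl t] by simp
    ultimately show ?thesis using orth2[OF k uc[OF t]] by simp
  qed
  have y0: "y k 0 = 0" for k unfolding y_def x0 by simp
  have yT: "y 0 T = scalar_prod w w" using y_sp[OF refl, of T 0] T xT unfolding a_def by simp
  define Q where "Q = mat\<^sub>r (Suc d) (Suc d) (\<lambda>i. if i = d then 0\<^sub>v (Suc d) else vec (Suc d) (\<lambda>k. a k $ i))"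
  have Qc: "Q \<in> carrier_mat (Suc d) (Suc d)" unfolding Q_def by simp
  have "Determinant.det Q = 0" unfolding Q_def by (rule det_row_0) auto
  then obtain v where v: "v \<in> carrier_vec (Suc d)" "v \<noteq> 0\<^sub>v (Suc d)" "Q *\<^sub>v v = 0\<^sub>v (Suc d)"
    using det_0_iff_vec_prod_zero[OF Qc] by auto
  have Qv: "(\<Sum>k\<in>{0..<Suc d}. a k $ i * v $ k) = 0" if i: "i < d" for i
  proof -
    have "(Q *\<^sub>v v) $ i = 0" using v(3) i by simp
    moreover have "row Q i = vec (Suc d) (\<lambda>k. a k $ i)" unfolding Q_def using i by simp
    ultimately show ?thesis using i v(1) unfolding Q_def by (simp add: scalar_prod_def)
  qed
  have lin: "(\<Sum>k\<in>{0..<Suc d}. v $ k * y k t) = 0" for t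
  proof -
    have "(\<Sum>k\<in>{0..<Suc d}. v $ k * y k t) = (\<Sum>k\<in>{0..<Suc d}. \<Sum>i\<in>{0..<d}. v $ k * (a k $ i * x t $ i))"
      unfolding y_def by (simp add: sum_distrib_left)
    also have "\<dots> = (\<Sum>i\<in>{0..<d}. \<Sum>k\<in>{0..<Suc d}. v $ k * (a k $ i * x t $ i))" by (rule sum.swap)
    also have "\<dots> = (\<Sum>i\<in>{0..<d}. x t $ i * (\<Sum>k\<in>{0..<Suc d}. a k $ i * v $ k))"
      by (rule sum.cong[OF refl]) (simp add: sum_distrib_left distrib_left mult_ac)
    also have "\<dots> = 0" using Qv by simp
    finally show ?thesis .
  qed
  define S where "S = {k. k < Suc d \<and> v $ k \<noteq> 0}"
  have "S \<noteq> {}"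
  proof
    assume "S = {}"
    then have "v = 0\<^sub>v (Suc d)" using v(1) unfolding S_def by (intro eq_vecI) auto
    then show False using v(2) by simp
  qed
  moreover have "finite S" unfolding S_def by simp
  ultimately have rS: "Max S \<in> S" and rmax: "\<And>k. k \<in> S \<Longrightarrow> k \<le> Max S" by auto
  define r where "r = Max S"
  have r: "r \<le> d" "v $ r \<noteq> 0" using rS unfolding r_def S_def by auto
  have vz: "v $ k = 0" if "r < k" "k < Suc d" for k proof (rule ccontr)
    assume "v $ k \<noteq> 0"
    then have "k \<in> S" using that(2) unfolding S_def by simp
    then have "k \<le> r" using rmax unfolding r_def by blast
    then show False using that(1) by simp
  qed
  define b where "b k = - v $ k / v $ r" for k
  have yr: "y r t = (\<Sum>k<r. b k * y k t)" for t
  proof -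
    have "(\<Sum>k\<in>{0..<Suc d}. v $ k * y k t) = (\<Sum>k\<in>{0..<Suc r}. v $ k * y k t)"
      by (rule sum.mono_neutral_right) (use r vz in auto)
    also have "\<dots> = (\<Sum>k<r. v $ k * y k t) + v $ r * y r t"
      by (simp add: atLeast0LessThan)
    finally have "(\<Sum>k<r. v $ k * y k t) + v $ r * y r t = 0" using lin by simp
    then have "y r t = - (\<Sum>k<r. v $ k * y k t) / v $ r" using r(2) by (simp add: field_simps)
    also have "\<dots> = (\<Sum>k<r. b k * y k t)" unfolding b_def
      by (simp add: sum_divide_distrib sum_negf[symmetric])
    finally show ?thesis .
  qed
  define B where "B = (\<Sum>k<r. (b k)\<^sup>2)"
  define g where "g t = (\<Sum>k<r. (y k t)\<^sup>2)" for t
  define g' where "g' t = (\<Sum>k<r. 2 * y k t * ((y (Suc k) t - y k t) / c))" for t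
  have dg: "(g has_real_derivative g' t) (at t within {0..T})" if t: "t \<in> {0..T}" for t
    unfolding g_def[abs_def] g'_def
  proof (rule DERIV_sum)
    fix k assume "k \<in> {..<r}"
    then have k: "k \<le> d" using r by auto
    show "((\<lambda>t. (y k t)\<^sup>2) has_real_derivative 2 * y k t * ((y (Suc k) t - y k t) / c)) (at t within {0..T})"
      using DERIV_mult[OF dy[OF k t] dy[OF k t]] by (simp add: power2_eq_square algebra_simps)
  qed
  have gb: "g' t \<le> (B / c) * g t" for t
  proof -
    have "(\<Sum>k<r. 2 * y k t * (y (Suc k) t - y k t)) \<le> (\<Sum>k<r. (y (Suc k) t)\<^sup>2 - (y k t)\<^sup>2)"
    proof (rule sum_mono)
      fix k
      have "0 \<le> (y (Suc k) t - y k t)\<^sup>2" by simp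
      then show "2 * y k t * (y (Suc k) t - y k t) \<le> (y (Suc k) t)\<^sup>2 - (y k t)\<^sup>2"
        by (simp add: power2_eq_square algebra_simps)
    qed
    also have "\<dots> = (y r t)\<^sup>2 - (y 0 t)\<^sup>2" by (rule sum_lessThan_telescope)
    also have "\<dots> \<le> (y r t)\<^sup>2" by simp
    also have "\<dots> \<le> B * g t" unfolding yr B_def g_def by (rule Cauchy_Schwarz_ineq_sum)
    finally have "(\<Sum>k<r. 2 * y k t * (y (Suc k) t - y k t)) \<le> B * g t" .
    moreover have "g' t = (\<Sum>k<r. 2 * y k t * (y (Suc k) t - y k t)) / c"
      unfolding g'_def by (simp add: sum_divide_distrib)
    ultimately show ?thesis using c by (simp add: divide_right_mono)
  qed
  have g0: "g t = 0" if t: "t \<in> {0..T}" for t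
    by (rule gronwall0[of T g g' "B / c"]) (use T dg gb t y0 in \<open>auto simp: g_def intro: sum_nonneg\<close>)
  have yk0: "y k t = 0" if "k \<le> r" "t \<in> {0..T}" for k t
  proof -
    have all: "\<forall>k\<in>{..<r}. (y k t)\<^sup>2 = 0" using g0[OF that(2)] unfolding g_def
      by (subst sum_nonneg_eq_0_iff[symmetric]) auto
    show ?thesis
    proof (cases "k < r")
      case True then show ?thesis using all by simp
    next
      case False then have "k = r" using that by simp
      then show ?thesis using yr[of t] all by simp
    qed
  qed
  have "y 0 T = 0" using yk0[of 0 T] T by simp
  then have "scalar_prod w w = 0" using yT by simp
  then show ?thesis using sp_self_0[OF w] by simp
qed


lemma smult_mat_vec: assumes "dim_vec z = dim_col X"
  shows "(c \<cdot>\<^sub>m (X :: real mat)) *\<^sub>v z = c \<cdot>\<^sub>v (X *\<^sub>v z)"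
  using assms by (intro eq_vecI) (auto simp: scalar_prod_def sum_distrib_left mult.assoc)

lemma transpose_smult: "transpose_mat (c \<cdot>\<^sub>m (X :: real mat)) = c \<cdot>\<^sub>m transpose_mat X"
  by (intro eq_matI) auto

theorem corollary11:
  fixes N n m p :: nat and B C H W :: "real mat" and \<delta> :: "nat \<Rightarrow> real" and h :: real
  assumes "N > 0" "n > 0" "m > 0" "p > 0"
    and "B \<in> carrier_mat n p" "C \<in> carrier_mat m n" "H \<in> carrier_mat n m"
    and "W \<in> carrier_mat N N" "\<forall>i<N. W $$ (i, i) = 0"
    and "\<forall>i<N. \<delta> i \<in> {0, 1}"
    and "h > 0"
    and "ct_controllable (1\<^sub>m (N * n) + kron W (H * C)) (kron (mat_diag N \<delta>) B)"
  shows "dt_controllable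
           (exp h \<cdot>\<^sub>m 1\<^sub>m (N * n) + (exp h - 1) \<cdot>\<^sub>m kron W (H * C))
           ((exp h - 1) \<cdot>\<^sub>m kron (mat_diag N \<delta>) B)"
proof -
  define d where "d = N * n"
  define q where "q = N * p"
  define M where "M = kron W (H * C)"
  define Dm where "Dm = kron (mat_diag N \<delta>) B"
  define c where "c = exp h - 1"
  have c: "c > 0" unfolding c_def using \<open>h > 0\<close> by simp
  have HC: "dim_row (H * C) = n" "dim_col (H * C) = n" using assms(6,7) by auto
  have M: "M \<in> carrier_mat d d" unfolding M_def kron_def d_def
    using assms(8) HC by (intro carrier_matI) simp_all
  have Dm: "Dm \<in> carrier_mat d q"
  proof -
    have "dim_row (mat_diag N \<delta>) = N" "dim_col (mat_diag N \<delta>) = N"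
      using mat_diag_dim[of N \<delta>] unfolding carrier_mat_def by auto
    then show ?thesis using assms(5) unfolding Dm_def kron_def d_def q_def by (intro carrier_matI) simp_all
  qed
  define A where "A = 1\<^sub>m d + M"
  define Phi where "Phi = exp h \<cdot>\<^sub>m 1\<^sub>m d + c \<cdot>\<^sub>m M"
  define Psi where "Psi = c \<cdot>\<^sub>m Dm"
  have A: "A \<in> carrier_mat d d" unfolding A_def using M by simp
  have Phi: "Phi \<in> carrier_mat d d" unfolding Phi_def using M by simp
  have Psi: "Psi \<in> carrier_mat d q" unfolding Psi_def using Dm by simp
  have PhiA: "Phi *\<^sub>v x = x + c \<cdot>\<^sub>v (A *\<^sub>v x)" if x: "x \<in> carrier_vec d" for x
  proof -
    have "Phi *\<^sub>v x = (exp h \<cdot>\<^sub>m 1\<^sub>m d) *\<^sub>v x + (c \<cdot>\<^sub>m M) *\<^sub>v x"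
      unfolding Phi_def by (rule add_mult_distrib_mat_vec[of _ d d]) (use M x in simp_all)
    also have "\<dots> = exp h \<cdot>\<^sub>v x + c \<cdot>\<^sub>v (M *\<^sub>v x)" using x M by (simp add: smult_mat_vec)
    finally have 1: "Phi *\<^sub>v x = exp h \<cdot>\<^sub>v x + c \<cdot>\<^sub>v (M *\<^sub>v x)" .
    have "A *\<^sub>v x = 1\<^sub>m d *\<^sub>v x + M *\<^sub>v x"
      unfolding A_def by (rule add_mult_distrib_mat_vec[of _ d d]) (use M x in simp_all)
    then have 2: "A *\<^sub>v x = x + M *\<^sub>v x" using x by simp
    have Mx: "M *\<^sub>v x \<in> carrier_vec d" using M x by simp
    show ?thesis unfolding 1 2 using x Mx M
      by (intro eq_vecI) (auto simp: c_def algebra_simps)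
  qed
  have ct: "ct_controllable A Dm" using assms(12) unfolding A_def M_def Dm_def d_def by simp
  have "dt_controllable Phi Psi"
  proof (rule dt_ctrl[OF Phi Psi])
    fix w assume w: "w \<in> carrier_vec d"
      and orth: "\<forall>j<Suc d. transpose_mat Psi *\<^sub>v itv (transpose_mat Phi) j w = 0\<^sub>v q"
    have orth': "\<forall>j<Suc d. transpose_mat Dm *\<^sub>v itv (transpose_mat Phi) j w = 0\<^sub>v q"
    proof (intro allI impI)
      fix j assume j: "j < Suc d"
      let ?z = "transpose_mat Dm *\<^sub>v itv (transpose_mat Phi) j w"
      have cz: "c \<cdot>\<^sub>v ?z = 0\<^sub>v q" using orth j unfolding Psi_def transpose_smult using smult_mat_vec[of "itv (transpose_mat Phi) j w" "transpose_mat Dm" c] Dm Phi w by simp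
      have dimz: "dim_vec ?z = q" using Dm by simp
      show "?z = 0\<^sub>v q"
      proof (rule eq_vecI)
        fix i assume i: "i < dim_vec (0\<^sub>v q :: real vec)"
        have "(c \<cdot>\<^sub>v ?z) $ i = 0" using cz i by simp
        then have "c * ?z $ i = 0" using i dimz by simp
        then show "?z $ i = 0\<^sub>v q $ i" using c i by simp
      qed (use dimz in simp)
    qed
    show "w = 0\<^sub>v d" by (rule ct_part[OF A Dm Phi c PhiA ct w orth'])
  qed
  then show ?thesis unfolding Phi_def Psi_def c_def M_def Dm_def d_def .
qed

end
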